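(* Let $n\geq 1$. Consider the arrangement of the lines $\mathcal{L}_0,\dots,\mathcal{L}_{n-1}$. Then: (i) exactly $n$ of its regions lie in $\mathcal{H}_{n-1}^-$, and their codes are the words $1^k0^{n-k}$, $k=0,1,\dots,n-1$; (ii) the codes of the regions lying in $\mathcal{H}_{n-1}^+$ are exactly the words $\pi 1$ where $\pi$ ranges over $\mathcal{P}_{n-1}$ (each region of the arrangement of $\mathcal{L}_0,\dots,\mathcal{L}_{n-2}$ giving exactly one such region).
   Context: For an integer $m\geq 0$, $\mathcal{L}_m$ is the line $y=mx-m^2$, $H_m(x,y)=y-mx+m^2$, $\mathcal{H}_m^+=\{H_m>0\}$ (the side containing $(-1,1)$) and $\mathcal{H}_m^-=\{H_m<0\}$. For $n\geq 0$, the regions of the arrangement of $\mathcal{L}_0,\dots,\mathcal{L}_{n-1}$ are the connected components of $\mathbb{R}^2\setminus(\mathcal{L}_0\cup\dots\cup\mathcal{L}_{n-1})$ (for $n=0$, the whole plane). Each region lies, for each $i$, entirely in $\mathcal{H}_i^+$ or entirely in $\mathcal{H}_i^-$; its code is the binary word $\sigma_0\sigma_1\cdots\sigma_{n-1}$ with $\sigma_i=1$ if the region lies in $\mathcal{H}_i^+$ and $\sigma_i=0$ if it lies in $\mathcal{H}_i^-$. $\mathcal{P}_n$ is the set of codes of the regions of this arrangement; $\mathcal{P}_0=\{\varepsilon\}$ with $\varepsilon$ the empty word. Words are concatenated; $\sigma^k$ denotes $k$ consecutive copies of the letter $\sigma$, with $\sigma^k=\varepsilon$ for $k\leq 0$.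 *)

theory Defs
  imports "HOL-Analysis.Analysis"
begin

definition H :: "nat \<Rightarrow> real \<times> real \<Rightarrow> real" where
  "H m p = snd p - real m * fst p + (real m)\<^sup>2"

definition Hplus :: "nat \<Rightarrow> (real \<times> real) set" where
  "Hplus m = {p. H m p > 0}"

definition Hminus :: "nat \<Rightarrow> (real \<times> real) set" where
  "Hminus m = {p. H m p < 0}"

definition line :: "nat \<Rightarrow> (real \<times> real) set" where
  "line m = {p. H m p = 0}"

definition complement :: "nat \<Rightarrow> (real \<times> real) set" where
  "complement n = UNIV - (\<Union>i<n. line i)"

definition regions :: "nat \<Rightarrow> (real \<times> real) set set" where
  "regions n = {connected_component_set (complement n) p | p. p \<in> complement n}"

definition point_code :: "nat \<Rightarrow> real \<times> real \<Rightarrow> nat list" where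
  "point_code n p = map (\<lambda>i. if H i p > 0 then 1 else 0) [0..<n]"

text \<open>Code of a region: code of any of its points (well defined, as a region
  lies entirely on one side of each line).\<close>
definition region_code :: "nat \<Rightarrow> (real \<times> real) set \<Rightarrow> nat list" where
  "region_code n R = point_code n (SOME p. p \<in> R)"

definition P :: "nat \<Rightarrow> nat list set" where
  "P n = region_code n ` regions n"

end

theory Submission
  imports Defs
begin


lemma comp_iff: "q \<in> complement n \<longleftrightarrow> (\<forall>i<n. H i q \<noteq> 0)"
  by (auto simp: complement_def line_def)

lemma pc_eq: "point_code n q = point_code n p \<longleftrightarrow> (\<forall>i<n. (H i q > 0 \<longleftrightarrow> H i p > 0))"
  by (auto simp: point_code_def map_eq_conv split: if_splits)

lemma conv_pos: fixes A B u v :: real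
  assumes a: "0 \<le> u" "0 \<le> v" "u + v = 1" "0 < A" "0 < B" shows "0 < u * A + v * B"
proof (cases "u = 0")
  case True then show ?thesis using a by simp
next
  case False
  then have "u * A > 0" using a by simp
  moreover have "v * B \<ge> 0" using a by simp
  ultimately show ?thesis by linarith
qed

lemma H_lin: assumes "u + v = 1"
  shows "H i (u *\<^sub>R q1 + v *\<^sub>R q2) = u * H i q1 + v * H i q2"
proof -
  have v: "v = 1 - u" using assms by simp
  show ?thesis unfolding v by (simp add: H_def algebra_simps)
qed

definition cellset :: "nat \<Rightarrow> real \<times> real \<Rightarrow> (real \<times> real) set" where
  "cellset n p = {q. \<forall>i<n. (H i p > 0 \<and> H i q > 0) \<or> (H i p < 0 \<and> H i q < 0)}"

lemma convex_cellset: "convex (cellset n p)"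
  unfolding convex_def cellset_def
proof (intro allI ballI impI, simp only: mem_Collect_eq, intro allI impI)
  fix x y :: "real \<times> real" and u v :: real and i
  assume x: "\<forall>i<n. 0 < H i p \<and> 0 < H i x \<or> H i p < 0 \<and> H i x < 0"
    and y: "\<forall>i<n. 0 < H i p \<and> 0 < H i y \<or> H i p < 0 \<and> H i y < 0"
    and uv: "0 \<le> u" "0 \<le> v" "u + v = 1" and i: "i < n"
  have e: "H i (u *\<^sub>R x + v *\<^sub>R y) = u * H i x + v * H i y" using H_lin uv by blast
  show "0 < H i p \<and> 0 < H i (u *\<^sub>R x + v *\<^sub>R y) \<or> H i p < 0 \<and> H i (u *\<^sub>R x + v *\<^sub>R y) < 0"
  proof (cases "0 < H i p")
    case True
    then have "0 < H i x" "0 < H i y" using x y i by auto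
    then show ?thesis using True e conv_pos[OF uv] by simp
  next
    case False
    then have "0 < - H i x" "0 < - H i y" using x y i by auto
    from conv_pos[OF uv this] have "u * H i x + v * H i y < 0" by simp
    then show ?thesis using e x i False by auto
  qed
qed

lemma cellset_eq: assumes "p \<in> complement n"
  shows "{q \<in> complement n. point_code n q = point_code n p} = cellset n p"
  using assms unfolding cellset_def comp_iff pc_eq
proof (intro set_eqI iffI; simp only: mem_Collect_eq)
  fix q assume "(\<forall>i<n. H i q \<noteq> 0) \<and> (\<forall>i<n. (0 < H i q) = (0 < H i p))"
  then show "\<forall>i<n. 0 < H i p \<and> 0 < H i q \<or> H i p < 0 \<and> H i q < 0"
  proof (intro allI impI)
    fix i assume i: "i < n"
    have "H i p \<noteq> 0" using assms i by (simp add: comp_iff)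
    moreover have "H i q \<noteq> 0" "(0 < H i q) = (0 < H i p)" using i \<open>(\<forall>i<n. H i q \<noteq> 0) \<and> _\<close> by auto
    ultimately show "0 < H i p \<and> 0 < H i q \<or> H i p < 0 \<and> H i q < 0" by linarith
  qed
next
  fix q assume "\<forall>i<n. 0 < H i p \<and> 0 < H i q \<or> H i p < 0 \<and> H i q < 0"
  then show "(\<forall>i<n. H i q \<noteq> 0) \<and> (\<forall>i<n. (0 < H i q) = (0 < H i p))"
    by force
qed

lemma comp_cell: assumes p: "p \<in> complement n"
  shows "connected_component_set (complement n) p = {q \<in> complement n. point_code n q = point_code n p}"
proof
  show "{q \<in> complement n. point_code n q = point_code n p} \<subseteq> connected_component_set (complement n) p"
    unfolding cellset_eq[OF p]
    apply (rule connected_component_maximal)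
    using p cellset_eq[OF p] convex_connected[OF convex_cellset] by auto
next
  let ?K = "connected_component_set (complement n) p"
  show "?K \<subseteq> {q \<in> complement n. point_code n q = point_code n p}"
  proof
    fix q assume q: "q \<in> ?K"
    have Ksub: "?K \<subseteq> complement n" by (rule connected_component_subset)
    have pK: "p \<in> ?K" using p by simp
    have "\<forall>i<n. (H i q > 0 \<longleftrightarrow> H i p > 0)"
    proof (intro allI impI)
      fix i assume i: "i < n"
      have cont: "continuous_on ?K (H i)" unfolding H_def by (intro continuous_intros)
      have conn: "connected (H i ` ?K)" by (rule connected_continuous_image[OF cont]) simp
      have nz: "0 \<notin> H i ` ?K" using Ksub i by (auto simp: comp_iff)
      have hq: "H i q \<in> H i ` ?K" "H i p \<in> H i ` ?K" using q pK by auto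
      have "H i q \<noteq> 0" "H i p \<noteq> 0" using hq nz by metis+
      moreover have "\<not> (H i q < 0 \<and> 0 < H i p)"
        using conn hq nz unfolding connected_iff_interval by (meson less_imp_le)
      moreover have "\<not> (H i p < 0 \<and> 0 < H i q)"
        using conn hq nz unfolding connected_iff_interval by (meson less_imp_le)
      ultimately show "(H i q > 0 \<longleftrightarrow> H i p > 0)" by linarith
    qed
    then show "q \<in> {q \<in> complement n. point_code n q = point_code n p}"
      using q Ksub by (auto simp: pc_eq)
  qed
qed



definition cell :: "nat \<Rightarrow> nat list \<Rightarrow> (real \<times> real) set" where
  "cell n c = {q \<in> complement n. point_code n q = c}"

definition S :: "nat \<Rightarrow> nat list set" where
  "S n = point_code n ` complement n"

lemma regions_eq: "regions n = cell n ` S n"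
proof -
  have "regions n = (\<lambda>p. cell n (point_code n p)) ` complement n"
    unfolding regions_def cell_def using comp_cell by blast
  then show ?thesis by (simp add: S_def image_image)
qed

lemma rc_cell: assumes "c \<in> S n" shows "region_code n (cell n c) = c"
proof -
  obtain p where p: "p \<in> complement n" "c = point_code n p" using assms S_def by auto
  then have "p \<in> cell n c" by (simp add: cell_def)
  then have "(SOME p. p \<in> cell n c) \<in> cell n c" by (rule someI)
  then show ?thesis by (simp add: region_code_def cell_def)
qed

lemma inj_rc: "inj_on (region_code n) (regions n)"
  unfolding regions_eq inj_on_def using rc_cell by auto

lemma P_eq: "P n = S n"
proof -
  have "P n = region_code n ` cell n ` S n" by (simp add: P_def regions_eq)
  also have "\<dots> = S n" using rc_cell by (force simp: image_image)
  finally show ?thesis .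
qed

lemma card_regions: "card (regions n) = card (S n)"
  using card_image[OF inj_rc[of n]] P_eq[of n] by (simp add: P_def)

lemma pc_Suc: "point_code (Suc m) q = point_code m q @ [if H m q > 0 then 1 else 0]"
  by (simp add: point_code_def)

lemma cell_sub_minus: assumes "q \<in> complement (Suc m)" "H m q < 0"
  shows "cell (Suc m) (point_code (Suc m) q) \<subseteq> Hminus m"
proof
  fix q' assume "q' \<in> cell (Suc m) (point_code (Suc m) q)"
  then have "q' \<in> complement (Suc m)" "point_code (Suc m) q' = point_code (Suc m) q"
    by (auto simp: cell_def)
  then have "H m q' \<noteq> 0" "(H m q' > 0) = (H m q > 0)" by (auto simp: comp_iff pc_eq)
  then show "q' \<in> Hminus m" using assms by (auto simp: Hminus_def)
qed

lemma cell_sub_plus: assumes "q \<in> complement (Suc m)" "H m q > 0"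
  shows "cell (Suc m) (point_code (Suc m) q) \<subseteq> Hplus m"
proof
  fix q' assume "q' \<in> cell (Suc m) (point_code (Suc m) q)"
  then have "q' \<in> complement (Suc m)" "point_code (Suc m) q' = point_code (Suc m) q"
    by (auto simp: cell_def)
  then have "H m q' \<noteq> 0" "(H m q' > 0) = (H m q > 0)" by (auto simp: comp_iff pc_eq)
  then show "q' \<in> Hplus m" using assms by (auto simp: Hplus_def)
qed

lemma img_minus: "region_code (Suc m) ` {R \<in> regions (Suc m). R \<subseteq> Hminus m}
   = {point_code (Suc m) q | q. q \<in> complement (Suc m) \<and> H m q < 0}" (is "?L = ?R")
proof
  show "?L \<subseteq> ?R"
  proof
    fix c assume "c \<in> ?L"
    then obtain p where p: "p \<in> complement (Suc m)" "cell (Suc m) (point_code (Suc m) p) \<subseteq> Hminus m"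
      "c = region_code (Suc m) (cell (Suc m) (point_code (Suc m) p))"
      by (auto simp: regions_eq S_def)
    have "p \<in> cell (Suc m) (point_code (Suc m) p)" using p by (simp add: cell_def)
    then have "H m p < 0" using p by (auto simp: Hminus_def)
    moreover have "c = point_code (Suc m) p" using p rc_cell by (simp add: S_def)
    ultimately show "c \<in> ?R" using p by blast
  qed
next
  show "?R \<subseteq> ?L"
  proof
    fix c assume "c \<in> ?R"
    then obtain q where q: "q \<in> complement (Suc m)" "H m q < 0" "c = point_code (Suc m) q" by blast
    have "cell (Suc m) c \<in> {R \<in> regions (Suc m). R \<subseteq> Hminus m}"
      using q cell_sub_minus by (auto simp: regions_eq S_def)
    moreover have "region_code (Suc m) (cell (Suc m) c) = c" using q rc_cell by (simp add: S_def)
    ultimately show "c \<in> ?L" by (metis image_eqI)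
  qed
qed

lemma img_plus: "region_code (Suc m) ` {R \<in> regions (Suc m). R \<subseteq> Hplus m}
   = {point_code (Suc m) q | q. q \<in> complement (Suc m) \<and> H m q > 0}" (is "?L = ?R")
proof
  show "?L \<subseteq> ?R"
  proof
    fix c assume "c \<in> ?L"
    then obtain p where p: "p \<in> complement (Suc m)" "cell (Suc m) (point_code (Suc m) p) \<subseteq> Hplus m"
      "c = region_code (Suc m) (cell (Suc m) (point_code (Suc m) p))"
      by (auto simp: regions_eq S_def)
    have "p \<in> cell (Suc m) (point_code (Suc m) p)" using p by (simp add: cell_def)
    then have "H m p > 0" using p by (auto simp: Hplus_def)
    moreover have "c = point_code (Suc m) p" using p rc_cell by (simp add: S_def)
    ultimately show "c \<in> ?R" using p by blast
  qed
next
  show "?R \<subseteq> ?L"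
  proof
    fix c assume "c \<in> ?R"
    then obtain q where q: "q \<in> complement (Suc m)" "H m q > 0" "c = point_code (Suc m) q" by blast
    have "cell (Suc m) c \<in> {R \<in> regions (Suc m). R \<subseteq> Hplus m}"
      using q cell_sub_plus by (auto simp: regions_eq S_def)
    moreover have "region_code (Suc m) (cell (Suc m) c) = c" using q rc_cell by (simp add: S_def)
    ultimately show "c \<in> ?L" by (metis image_eqI)
  qed
qed



lemma H_Q: "H i (a + b, a * b) = (real i - a) * (real i - b)"
  by (simp add: H_def power2_eq_square algebra_simps)

lemma H_conv_id: "(real c - real a) * H b p = (real c - real b) * H a p + (real b - real a) * H c p
   - (real b - real a) * (real c - real b) * (real c - real a)"
  by (simp add: H_def power2_eq_square algebra_simps)

lemma H_conv: assumes "a < b" "b < c" "H a p \<le> 0" "H c p \<le> 0" shows "H b p < 0"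
proof -
  have "(real c - real b) * H a p \<le> 0" using assms by (simp add: mult_nonneg_nonpos)
  moreover have "(real b - real a) * H c p \<le> 0" using assms by (simp add: mult_nonneg_nonpos)
  moreover have "(real b - real a) * (real c - real b) * (real c - real a) > 0" using assms by simp
  ultimately have "(real c - real a) * H b p < 0" using H_conv_id[of c a b p] by linarith
  moreover have "real c - real a > 0" using assms by simp
  ultimately show ?thesis by (simp add: mult_less_0_iff)
qed

lemma pc_nth: "i < n \<Longrightarrow> point_code n q ! i = (if H i q > 0 then 1 else 0)"
  by (simp add: point_code_def)

lemma rep_nth: "k \<le> n \<Longrightarrow> i < n \<Longrightarrow> (replicate k (1::nat) @ replicate (n - k) 0) ! i = (if i < k then 1 else 0)"
  by (simp add: nth_append)

lemma G1a: assumes q: "q \<in> complement (Suc m)" "H m q < 0"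
  shows "\<exists>k < Suc m. point_code (Suc m) q = replicate k 1 @ replicate (Suc m - k) 0"
proof -
  define k where "k = (LEAST i. H i q < 0)"
  have km: "k \<le> m" unfolding k_def using q by (simp add: Least_le)
  have hk: "H k q < 0" unfolding k_def using q by (metis LeastI)
  have lt: "H i q > 0" if "i < k" for i
  proof -
    have "\<not> H i q < 0" using that not_less_Least k_def by blast
    moreover have "H i q \<noteq> 0" using q that km by (simp add: comp_iff)
    ultimately show ?thesis by linarith
  qed
  have ge: "H i q < 0" if "k \<le> i" "i \<le> m" for i
  proof (cases "i = k \<or> i = m")
    case True then show ?thesis using hk q by auto
  next
    case False then show ?thesis using H_conv[of k i m q] that hk q by auto
  qed
  have "point_code (Suc m) q = replicate k 1 @ replicate (Suc m - k) 0"
  proof (rule nth_equalityI)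
    show "length (point_code (Suc m) q) = length (replicate k 1 @ replicate (Suc m - k) (0::nat))"
      using km by (simp add: point_code_def)
    fix i assume "i < length (point_code (Suc m) q)"
    then have i: "i < Suc m" by (simp add: point_code_def)
    show "point_code (Suc m) q ! i = (replicate k 1 @ replicate (Suc m - k) 0) ! i"
      using pc_nth[OF i] rep_nth[of k "Suc m" i] i km lt[of i] ge[of i] by (cases "i < k") auto
  qed
  moreover have "k < Suc m" using km by simp
  ultimately show ?thesis by blast
qed

lemma G1b: assumes k: "k < Suc m"
  shows "\<exists>q. q \<in> complement (Suc m) \<and> H m q < 0 \<and> point_code (Suc m) q = replicate k 1 @ replicate (Suc m - k) 0"
proof -
  define a where "a = real k - 1/2"
  define b where "b = real m + 1/2"
  define q where "q = (a + b, a * b)"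
  have Hq: "H i q = (real i - a) * (real i - b)" for i unfolding q_def by (rule H_Q)
  have pos: "H i q > 0" if "i < k" for i
    unfolding Hq using that k by (intro mult_neg_neg) (auto simp: a_def b_def)
  have neg: "H i q < 0" if "k \<le> i" "i \<le> m" for i
    unfolding Hq using that by (intro mult_pos_neg) (auto simp: a_def b_def)
  have c: "q \<in> complement (Suc m)" unfolding comp_iff
  proof (intro allI impI)
    fix i assume "i < Suc m"
    then show "H i q \<noteq> 0" using pos[of i] neg[of i] by (cases "i < k") auto
  qed
  have "point_code (Suc m) q = replicate k 1 @ replicate (Suc m - k) 0"
  proof (rule nth_equalityI)
    show "length (point_code (Suc m) q) = length (replicate k 1 @ replicate (Suc m - k) (0::nat))"
      using k by (simp add: point_code_def)
    fix i assume "i < length (point_code (Suc m) q)"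
    then have i: "i < Suc m" by (simp add: point_code_def)
    show "point_code (Suc m) q ! i = (replicate k 1 @ replicate (Suc m - k) 0) ! i"
      using pc_nth[OF i] rep_nth[of k "Suc m" i] i k pos[of i] neg[of i] by (cases "i < k") auto
  qed
  moreover have "H m q < 0" using neg[of m] k by simp
  ultimately show ?thesis using c by blast
qed

lemma G2b: assumes p: "p \<in> complement m"
  shows "\<exists>q. q \<in> complement (Suc m) \<and> H m q > 0 \<and> point_code m q = point_code m p"
proof (cases "H m p > 0")
  case True
  then show ?thesis using p by (intro exI[of _ p]) (auto simp: comp_iff less_Suc_eq)
next
  case False
  define k where "k = (LEAST i. i = m \<or> H i p < 0)"
  have km: "k \<le> m" unfolding k_def by (simp add: Least_le)
  have hk: "k = m \<or> H k p < 0" unfolding k_def by (rule LeastI[of _ m]) simp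
  have lt: "H i p > 0" if "i < k" for i
  proof -
    have "\<not> (i = m \<or> H i p < 0)" using that not_less_Least k_def by blast
    moreover have "H i p \<noteq> 0" using p that km by (simp add: comp_iff)
    ultimately show ?thesis by linarith
  qed
  have ge: "H i p < 0" if "k \<le> i" "i < m" for i
  proof (cases "i = k")
    case True then show ?thesis using hk that by auto
  next
    case False then show ?thesis using H_conv[of k i m p] that hk False \<open>\<not> H m p > 0\<close> by auto
  qed
  define a where "a = real k - 1/2"
  define b where "b = real m - 1/2"
  define q where "q = (a + b, a * b)"
  have Hq: "H i q = (real i - a) * (real i - b)" for i unfolding q_def by (rule H_Q)
  have pos: "H i q > 0" if "i < k" for i
    unfolding Hq using that km by (intro mult_neg_neg) (auto simp: a_def b_def)
  have neg: "H i q < 0" if "k \<le> i" "i < m" for i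
    unfolding Hq using that by (intro mult_pos_neg) (auto simp: a_def b_def)
  have posm: "H m q > 0"
    unfolding Hq using km by (intro mult_pos_pos) (auto simp: a_def b_def)
  have c: "q \<in> complement (Suc m)" unfolding comp_iff
  proof (intro allI impI)
    fix i assume "i < Suc m"
    then show "H i q \<noteq> 0" using pos[of i] neg[of i] posm by (cases "i < k"; cases "i = m") auto
  qed
  have "point_code m q = point_code m p"
    unfolding pc_eq
  proof (intro allI impI)
    fix i assume "i < m"
    then show "(0 < H i q) = (0 < H i p)" using pos[of i] neg[of i] lt[of i] ge[of i] by (cases "i < k") auto
  qed
  then show ?thesis using c posm by blast
qed

lemma G1: "{point_code (Suc m) q | q. q \<in> complement (Suc m) \<and> H m q < 0}
   = {replicate k 1 @ replicate (Suc m - k) 0 | k. k < Suc m}"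
proof (intro set_eqI iffI)
  fix c :: "nat list" assume "c \<in> {point_code (Suc m) q | q. q \<in> complement (Suc m) \<and> H m q < 0}"
  then obtain q where "q \<in> complement (Suc m)" "H m q < 0" "c = point_code (Suc m) q" by blast
  then show "c \<in> {replicate k 1 @ replicate (Suc m - k) 0 | k. k < Suc m}" using G1a by blast
next
  fix c :: "nat list" assume "c \<in> {replicate k 1 @ replicate (Suc m - k) 0 | k. k < Suc m}"
  then obtain k where k: "k < Suc m" "c = replicate k 1 @ replicate (Suc m - k) 0" by blast
  obtain q where "q \<in> complement (Suc m)" "H m q < 0" "point_code (Suc m) q = replicate k 1 @ replicate (Suc m - k) 0"
    using G1b[OF k(1)] by blast
  then show "c \<in> {point_code (Suc m) q | q. q \<in> complement (Suc m) \<and> H m q < 0}"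
    using k(2) by (intro CollectI exI[of _ q]) simp
qed

lemma G2: "{point_code (Suc m) q | q. q \<in> complement (Suc m) \<and> H m q > 0}
   = {\<pi> @ [1] | \<pi>. \<pi> \<in> S m}"
proof
  show "{point_code (Suc m) q | q. q \<in> complement (Suc m) \<and> H m q > 0} \<subseteq> {\<pi> @ [1] | \<pi>. \<pi> \<in> S m}"
  proof
    fix c :: "nat list" assume "c \<in> {point_code (Suc m) q | q. q \<in> complement (Suc m) \<and> H m q > 0}"
    then obtain q where q: "q \<in> complement (Suc m)" "H m q > 0" "c = point_code (Suc m) q" by blast
    then have "q \<in> complement m" by (simp add: comp_iff)
    then show "c \<in> {\<pi> @ [1] | \<pi>. \<pi> \<in> S m}" using q by (auto simp: pc_Suc S_def)
  qed
next
  show "{\<pi> @ [1] | \<pi>. \<pi> \<in> S m} \<subseteq> {point_code (Suc m) q | q. q \<in> complement (Suc m) \<and> H m q > 0}"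
  proof
    fix c :: "nat list" assume "c \<in> {\<pi> @ [1] | \<pi>. \<pi> \<in> S m}"
    then obtain p where p: "p \<in> complement m" "c = point_code m p @ [1]" by (auto simp: S_def)
    obtain q where q: "q \<in> complement (Suc m)" "H m q > 0" "point_code m q = point_code m p"
      using G2b[OF p(1)] by blast
    then have "c = point_code (Suc m) q" using p by (simp add: pc_Suc)
    then show "c \<in> {point_code (Suc m) q | q. q \<in> complement (Suc m) \<and> H m q > 0}"
      using q by blast
  qed
qed



lemma card_A: "card {replicate k (1::nat) @ replicate (Suc m - k) 0 | k. k < Suc m} = Suc m"
proof -
  have e: "{replicate k (1::nat) @ replicate (Suc m - k) 0 | k. k < Suc m}
     = (\<lambda>k. replicate k (1::nat) @ replicate (Suc m - k) 0) ` {..<Suc m}" by auto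
  have s: "sum_list (replicate k (1::nat) @ replicate (Suc m - k) 0) = k" for k
    by (simp add: sum_list_replicate)
  have "inj_on (\<lambda>k. replicate k (1::nat) @ replicate (Suc m - k) 0) {..<Suc m}"
    by (rule inj_onI) (metis s)
  then show ?thesis unfolding e by (simp add: card_image)
qed

theorem proposition17:
  fixes n :: nat
  assumes "n \<ge> 1"
  shows "card {R \<in> regions n. R \<subseteq> Hminus (n - 1)} = n
       \<and> region_code n ` {R \<in> regions n. R \<subseteq> Hminus (n - 1)}
           = {replicate k 1 @ replicate (n - k) 0 | k. k < n}
       \<and> region_code n ` {R \<in> regions n. R \<subseteq> Hplus (n - 1)}
           = {\<pi> @ [1] | \<pi>. \<pi> \<in> P (n - 1)}
       \<and> inj_on (region_code n) {R \<in> regions n. R \<subseteq> Hplus (n - 1)}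
       \<and> card {R \<in> regions n. R \<subseteq> Hplus (n - 1)} = card (regions (n - 1))"
proof -
  obtain m where n: "n = Suc m" using assms by (cases n) auto
  have nm: "n - 1 = m" using n by simp
  let ?Rm = "{R \<in> regions (Suc m). R \<subseteq> Hminus m}"
  let ?Rp = "{R \<in> regions (Suc m). R \<subseteq> Hplus m}"
  have im: "region_code (Suc m) ` ?Rm = {replicate k 1 @ replicate (Suc m - k) 0 | k. k < Suc m}"
    using img_minus G1 by simp
  have injm: "inj_on (region_code (Suc m)) ?Rm" by (rule inj_on_subset[OF inj_rc]) auto
  have injp: "inj_on (region_code (Suc m)) ?Rp" by (rule inj_on_subset[OF inj_rc]) auto
  have cm: "card ?Rm = Suc m" using card_image[OF injm] im card_A by simp
  have ip: "region_code (Suc m) ` ?Rp = {\<pi> @ [1] | \<pi>. \<pi> \<in> P m}"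
    using img_plus G2 P_eq by simp
  have e: "{\<pi> @ [1::nat] | \<pi>. \<pi> \<in> S m} = (\<lambda>\<pi>. \<pi> @ [1]) ` S m" by auto
  have "card {\<pi> @ [1::nat] | \<pi>. \<pi> \<in> S m} = card (S m)"
    unfolding e by (rule card_image) (simp add: inj_on_def)
  then have cp: "card ?Rp = card (regions m)"
    using card_image[OF injp] ip P_eq card_regions by simp
  show ?thesis unfolding nm unfolding n using cm im ip injp cp by simp
qed

end
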